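(* Assume the tail assumption described in the context. Then for $k=1,2$, \[ \operatorname*{ess\,sup}_{a\ge\log_p2}\{\alpha^-_k(a)-a\}\le0,\qquad \operatorname*{ess\,sup}_{a\ge\log_p2}\{\alpha^+_k(a)-a\}\le0. \]
   Context: For $k=1,2$, $F^0_k,F^1_k$ are distribution functions on $\mathbb{R}$ (possibly depending on an index $p\to\infty$) with Lebesgue densities $f^0_k,f^1_k$, and $\ell_k=\log(f^1_k/f^0_k)$. Tail assumption: there exist measurable $\alpha^-_k,\alpha^+_k:\mathbb{R}\to\mathbb{R}$ such that $\alpha^-_k(a)\vee\alpha^+_k(a)>0$ on a set of positive Lebesgue measure and $\lim_{p\to\infty}\ell_k\{(F^0_k)^{-1}(p^{-a})\}/\log p=\alpha^-_k(a)$, $\lim_{p\to\infty}\ell_k\{(F^0_k)^{-1}(1-p^{-a})\}/\log p=\alpha^+_k(a)$, uniformly in $a\ge\log_p2$. Essential suprema are with respect to Lebesgue measure; $x\vee y=\max(x,y)$. *)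

theory Defs
  imports "HOL-Analysis.Analysis" "HOL-Probability.Essential_Supremum"
begin

definition cdf_with_density :: "(real \<Rightarrow> real) \<Rightarrow> (real \<Rightarrow> real) \<Rightarrow> bool" where
  "cdf_with_density F f \<longleftrightarrow>
     f \<in> borel_measurable lborel \<and> (\<forall>x. 0 \<le> f x) \<and>
     integrable lborel f \<and> integral\<^sup>L lborel f = 1 \<and>
     (\<forall>x. F x = set_lebesgue_integral lborel {..x} f)"

definition quantile :: "(real \<Rightarrow> real) \<Rightarrow> real \<Rightarrow> real" where
  "quantile F u = Inf {x. u \<le> F x}"

definition llr :: "(real \<Rightarrow> real) \<Rightarrow> (real \<Rightarrow> real) \<Rightarrow> real \<Rightarrow> ereal" where
  "llr f0 f1 x =
     (if 0 < f0 x \<and> 0 < f1 x then ereal (ln (f1 x / f0 x))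
      else if 0 < f0 x then -\<infinity>
      else if 0 < f1 x then \<infinity> else 0)"

definition unif_tail_limit :: "(nat \<Rightarrow> real \<Rightarrow> ereal) \<Rightarrow> (real \<Rightarrow> real) \<Rightarrow> bool" where
  "unif_tail_limit g \<alpha> \<longleftrightarrow>
     (\<forall>\<epsilon>>0. \<exists>P. \<forall>p\<ge>P. \<forall>a\<ge>log (real p) 2.
        \<exists>r. g p a = ereal r \<and> \<bar>r / ln (real p) - \<alpha> a\<bar> \<le> \<epsilon>)"

end

theory Submission imports Defs "HOL-Probability.Probability" begin

lemma density_measure_atMost:
  assumes "cdf_with_density F f"
  shows "measure (density lborel f) {..x} = F x"
proof -
  have fm[measurable]: "f \<in> borel_measurable lborel" and nn: "\<And>x. 0 \<le> f x" and int: "integrable lborel f"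
    and Fx: "F x = set_lebesgue_integral lborel {..x} f"
    using assms by (auto simp: cdf_with_density_def)
  have int2: "integrable lborel (\<lambda>y. f y * indicator {..x} y)"
    using integrable_mult_indicator[of "{..x}" lborel f] int by (simp add: mult.commute)
  have "emeasure (density lborel f) {..x} = (\<integral>\<^sup>+ y. ennreal (f y * indicator {..x} y) \<partial>lborel)"
    by (simp add: emeasure_density nn_integral_set_ennreal[symmetric] indicator_mult_ennreal mult.commute)
  also have "\<dots> = ennreal (\<integral> y. f y * indicator {..x} y \<partial>lborel)"
    by (rule nn_integral_eq_integral[OF int2]) (auto simp: nn)
  finally show ?thesis
    using Fx by (simp add: measure_def set_lebesgue_integral_def mult.commute nn)
qed

lemma quantile_push:
  assumes "cdf_with_density F f"
  shows "distr (restrict_space lborel {0<..<1::real}) borel (quantile F) = density lborel f"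
proof -
  have fm[measurable]: "f \<in> borel_measurable lborel" and nn: "\<And>x. 0 \<le> f x" and int: "integrable lborel f"
    and one: "integral\<^sup>L lborel f = 1"
    using assms by (auto simp: cdf_with_density_def)
  have "emeasure (density lborel f) UNIV = (\<integral>\<^sup>+ y. ennreal (f y) \<partial>lborel)"
    by (simp add: emeasure_density)
  also have "\<dots> = 1" using nn_integral_eq_integral[OF int] nn one by simp
  finally have e1: "emeasure (density lborel f) UNIV = 1" .
  interpret cdf_distribution "density lborel f"
  proof -
    have ps: "prob_space (density lborel f)" by (rule prob_spaceI) (simp add: e1)
    show "cdf_distribution (density lborel f)"
      unfolding cdf_distribution_def real_distribution_def real_distribution_axioms_def using ps by simp
  qed
  have C: "cdf (density lborel f) = F"
    by (rule ext) (simp add: cdf_def2 density_measure_atMost[OF assms])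
  show ?thesis using distr_I_eq_M unfolding C quantile_def[abs_def] by simp
qed

lemma quantile_measurable:
  assumes "cdf_with_density F f"
  shows "quantile F \<in> borel_measurable (restrict_space borel {0<..<1::real})"
proof -
  have fm[measurable]: "f \<in> borel_measurable lborel" and nn: "\<And>x. 0 \<le> f x" and int: "integrable lborel f"
    and one: "integral\<^sup>L lborel f = 1"
    using assms by (auto simp: cdf_with_density_def)
  have "emeasure (density lborel f) UNIV = (\<integral>\<^sup>+ y. ennreal (f y) \<partial>lborel)"
    by (simp add: emeasure_density)
  also have "\<dots> = 1" using nn_integral_eq_integral[OF int] nn one by simp
  finally have e1: "emeasure (density lborel f) UNIV = 1" .
  interpret cdf_distribution "density lborel f"
  proof -
    have ps: "prob_space (density lborel f)" by (rule prob_spaceI) (simp add: e1)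
    show "cdf_distribution (density lborel f)"
      unfolding cdf_distribution_def real_distribution_def real_distribution_axioms_def using ps by simp
  qed
  have C: "cdf (density lborel f) = F"
    by (rule ext) (simp add: cdf_def2 density_measure_atMost[OF assms])
  show ?thesis using measurable_CI unfolding C quantile_def[abs_def] by simp
qed

lemma quantile_nn_integral:
  assumes F: "cdf_with_density F f" and h[measurable]: "h \<in> borel_measurable borel"
  shows "(\<integral>\<^sup>+ u. h (quantile F u) * indicator {0<..<1::real} u \<partial>lborel) = (\<integral>\<^sup>+ x. f x * h x \<partial>lborel)"
proof -
  have fm[measurable]: "f \<in> borel_measurable lborel"
    using F by (auto simp: cdf_with_density_def)
  have Qm: "quantile F \<in> measurable (restrict_space lborel {0<..<1}) borel"
    using quantile_measurable[OF F] by (simp add: measurable_def space_restrict_space sets_restrict_space)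
  have "(\<integral>\<^sup>+ u. h (quantile F u) * indicator {0<..<1::real} u \<partial>lborel)
      = (\<integral>\<^sup>+ u. h (quantile F u) \<partial>restrict_space lborel {0<..<1})"
    by (subst nn_integral_restrict_space) auto
  also have "\<dots> = (\<integral>\<^sup>+ x. h x \<partial>distr (restrict_space lborel {0<..<1}) borel (quantile F))"
    by (subst nn_integral_distr[OF Qm]) auto
  also have "\<dots> = (\<integral>\<^sup>+ x. h x \<partial>density lborel f)"
    by (simp add: quantile_push[OF F])
  also have "\<dots> = (\<integral>\<^sup>+ x. f x * h x \<partial>lborel)"
    by (subst nn_integral_density) auto
  finally show ?thesis .
qed

lemma reflect_nn: "(\<integral>\<^sup>+ x. g x \<partial>lborel) = (\<integral>\<^sup>+ x. g (- x::real) \<partial>lborel)" if [measurable]: "g \<in> borel_measurable borel"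
proof -
  have "(\<integral>\<^sup>+ x. g x \<partial>lborel) = (\<integral>\<^sup>+ x. g x \<partial>distr lborel borel uminus)"
    by (simp add: lborel_distr_uminus)
  also have "\<dots> = (\<integral>\<^sup>+ x. g (- x::real) \<partial>lborel)"
    by (subst nn_integral_distr) auto
  finally show ?thesis .
qed

lemma subst_plus:
  fixes k :: "real \<Rightarrow> real"
  assumes [measurable]: "k \<in> borel_measurable borel" and q: "q > 1" and L: "0 < L" "L \<le> M"
  shows "(\<integral>\<^sup>+ t. ennreal (k (1 - q powr -t) * (q powr -t * ln q) * indicator {L..M} t) \<partial>lborel)
     \<le> (\<integral>\<^sup>+ u. ennreal (k u * indicator {0<..<1} u) \<partial>lborel)"
proof -
  let ?g = "\<lambda>t. 1 - q powr -t"
  have "(\<integral>\<^sup>+ t. ennreal (k (?g t) * (q powr -t * ln q) * indicator {L..M} t) \<partial>lborel)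
     = (\<integral>\<^sup>+ u. ennreal (k u * indicator {?g L..?g M} u) \<partial>lborel)"
  proof (rule nn_integral_substitution[symmetric])
    show "set_borel_measurable borel {?g L..?g M} k" by (simp add: set_borel_measurable_def)
    show "(?g has_real_derivative q powr -t * ln q) (at t)" for t
      using q by (auto intro!: derivative_eq_intros simp: powr_minus)
    show "continuous_on {L..M} (\<lambda>t. q powr -t * ln q)" using q by (intro continuous_intros) auto
    show "0 \<le> q powr -t * ln q" for t using q by simp
  qed (use L in auto)
  also have "\<dots> \<le> (\<integral>\<^sup>+ u. ennreal (k u * indicator {0<..<1} u) \<partial>lborel)"
  proof (rule nn_integral_mono)
    fix u
    have "{?g L..?g M} \<subseteq> {0<..<1}"
    proof
      fix u assume "u \<in> {?g L..?g M}"
      moreover have "q powr -L < 1" using q L by (simp add: powr_less_one)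
      moreover have "q powr -M > 0" using q by simp
      ultimately have "1 - q powr -L \<le> u" "u \<le> 1 - q powr -M" "q powr -L < 1" "q powr -M > 0" by auto
      then show "u \<in> {0<..<1}" unfolding greaterThanLessThan_iff by linarith
    qed
    then show "ennreal (k u * indicator {?g L..?g M} u) \<le> ennreal (k u * indicator {0<..<1} u)"
      by (cases "u \<in> {?g L..?g M}") (auto simp: indicator_def)
  qed
  finally show ?thesis .
qed

lemma subst_minus:
  fixes k :: "real \<Rightarrow> real"
  assumes [measurable]: "k \<in> borel_measurable borel" and q: "q > 1" and L: "0 < L" "L \<le> M"
  shows "(\<integral>\<^sup>+ t. ennreal (k (q powr -t) * (q powr -t * ln q) * indicator {L..M} t) \<partial>lborel)
     \<le> (\<integral>\<^sup>+ u. ennreal (k u * indicator {0<..<1} u) \<partial>lborel)"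
proof -
  let ?g = "\<lambda>t. q powr t"
  have "(\<integral>\<^sup>+ t. ennreal (k (q powr -t) * (q powr -t * ln q) * indicator {L..M} t) \<partial>lborel)
     = (\<integral>\<^sup>+ t. ennreal (k (q powr - (-t)) * (q powr - (-t) * ln q) * indicator {L..M} (-t)) \<partial>lborel)"
    by (rule reflect_nn) measurable
  also have "\<dots> = (\<integral>\<^sup>+ t. ennreal (k (?g t) * (q powr t * ln q) * indicator {-M..-L} t) \<partial>lborel)"
    by (intro nn_integral_cong) (auto simp: indicator_def)
  also have "\<dots> = (\<integral>\<^sup>+ u. ennreal (k u * indicator {?g (-M)..?g (-L)} u) \<partial>lborel)"
  proof (rule nn_integral_substitution[symmetric])
    show "set_borel_measurable borel {?g (-M)..?g (-L)} k" by (simp add: set_borel_measurable_def)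
    show "(?g has_real_derivative q powr t * ln q) (at t)" for t
      using q by (auto intro!: derivative_eq_intros)
    show "continuous_on {-M..-L} (\<lambda>t. q powr t * ln q)" using q by (intro continuous_intros) auto
    show "0 \<le> q powr t * ln q" for t using q by simp
  qed (use L in auto)
  also have "\<dots> \<le> (\<integral>\<^sup>+ u. ennreal (k u * indicator {0<..<1} u) \<partial>lborel)"
  proof (rule nn_integral_mono)
    fix u
    have "{?g (-M)..?g (-L)} \<subseteq> {0<..<1}"
    proof
      fix u assume "u \<in> {?g (-M)..?g (-L)}"
      moreover have "q powr -L < 1" using q L by (simp add: powr_less_one)
      moreover have "q powr -M > 0" using q by simp
      ultimately have "q powr -M \<le> u" "u \<le> q powr -L" "q powr -L < 1" "q powr -M > 0" by auto
      then show "u \<in> {0<..<1}" unfolding greaterThanLessThan_iff by linarith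
    qed
    then show "ennreal (k u * indicator {?g (-M)..?g (-L)} u) \<le> ennreal (k u * indicator {0<..<1} u)"
      by (cases "u \<in> {?g (-M)..?g (-L)}") (auto simp: indicator_def)
  qed
  finally show ?thesis .
qed

lemma llr_pos:
  assumes "llr f0 f1 x = ereal r" "r > 0"
  shows "0 < f0 x \<and> 0 < f1 x \<and> r = ln (f1 x / f0 x)"
  using assms by (auto simp: llr_def split: if_splits)

lemma main_generic:
  fixes F0 f0 F1 f1 :: "nat \<Rightarrow> real \<Rightarrow> real" and \<alpha> :: "real \<Rightarrow> real" and \<phi> :: "real \<Rightarrow> real \<Rightarrow> real"
  assumes dens0: "\<And>q. cdf_with_density (F0 q) (f0 q)"
    and dens1: "\<And>q. cdf_with_density (F1 q) (f1 q)"
    and meas: "\<alpha> \<in> borel_measurable lebesgue"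
    and tail: "unif_tail_limit (\<lambda>q a. llr (f0 q) (f1 q) (quantile (F0 q) (\<phi> (real q) a))) \<alpha>"
    and sub: "\<And>k q L M. k \<in> borel_measurable borel \<Longrightarrow> q > 1 \<Longrightarrow> 0 < L \<Longrightarrow> L \<le> M \<Longrightarrow>
      (\<integral>\<^sup>+ t. ennreal (k (\<phi> q t) * (q powr -t * ln q) * indicator {L..M} t) \<partial>lborel)
        \<le> (\<integral>\<^sup>+ u. ennreal (k u * indicator {0<..<1} u) \<partial>lborel)"
    and phi01: "\<And>q t. q > 1 \<Longrightarrow> t > 0 \<Longrightarrow> \<phi> q t \<in> {0<..<1}"
    and p: "p \<ge> (2::nat)"
  shows "esssup (restrict_space lebesgue {log (real p) 2..}) (\<lambda>a. ereal (\<alpha> a - a)) \<le> 0"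
proof (rule ccontr)
  assume nle: "\<not> ?thesis"
  define L where "L = log (real p) 2"
  have L0: "L > 0" using p by (simp add: L_def)
  have am[measurable]: "\<alpha> \<in> borel_measurable lebesgue" by (rule meas)
  have idm[measurable]: "(\<lambda>x::real. x) \<in> borel_measurable lebesgue" by (rule measurable_completion) simp
  have m1: "(\<lambda>a. ereal (\<alpha> a - a)) \<in> borel_measurable (restrict_space lebesgue {L..})"
    by (intro measurable_restrict_space1) measurable
  have "\<not> (AE a in restrict_space lebesgue {L..}. ereal (\<alpha> a - a) \<le> 0)"
    using nle m1 esssup_I unfolding L_def by blast
  then have nAE: "\<not> (AE a in lebesgue. a \<in> {L..} \<longrightarrow> \<alpha> a \<le> a)"
    by (subst (asm) AE_restrict_space_iff) auto
  define B where "B n = {a. L \<le> a \<and> a \<le> L + real n \<and> a + 1 / (real n + 1) < \<alpha> a}" for n :: nat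
  have Bm: "B n \<in> sets lebesgue" for n
  proof -
    have "{a \<in> space lebesgue. L \<le> a \<and> a \<le> L + real n \<and> a + 1 / (real n + 1) < \<alpha> a} \<in> sets lebesgue"
      by measurable
    then show ?thesis by (simp add: B_def)
  qed
  have "\<exists>n. B n \<notin> null_sets lebesgue"
  proof (rule ccontr)
    assume "\<not> ?thesis"
    then have "(\<Union>n. B n) \<in> null_sets lebesgue" by auto
    then have "AE a in lebesgue. a \<notin> (\<Union>n. B n)" by (rule AE_not_in)
    moreover have "a \<in> {L..} \<longrightarrow> \<alpha> a \<le> a" if "a \<notin> (\<Union>n. B n)" for a
    proof (rule ccontr)
      assume "\<not> ?thesis"
      then have aL: "L \<le> a" and gt: "a < \<alpha> a" by auto
      obtain n1 :: nat where n1: "a - L \<le> real n1" using real_arch_simple by blast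
      obtain n2 :: nat where n2: "1 / (\<alpha> a - a) < real n2" using reals_Archimedean2 by blast
      define n where "n = max n1 n2"
      have "1 / (real n + 1) < \<alpha> a - a"
      proof -
        have "1 / (\<alpha> a - a) < real n + 1" using n2 unfolding n_def by linarith
        then show ?thesis using gt by (simp add: field_simps)
      qed
      then have "a \<in> B n" using aL n1 unfolding B_def n_def by auto
      then show False using that by auto
    qed
    ultimately have "AE a in lebesgue. a \<in> {L..} \<longrightarrow> \<alpha> a \<le> a" by (auto elim: AE_mp)
    then show False using nAE by blast
  qed
  then obtain n where nB: "B n \<notin> null_sets lebesgue" by blast
  define \<delta> where "\<delta> = 1 / (real n + 1)"
  define M where "M = L + real n"
  have \<delta>0: "\<delta> > 0" unfolding \<delta>_def by simp
  define A where "A = main_part lborel (B n)"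
  have Am[measurable]: "A \<in> sets lborel" unfolding A_def using main_part_sets[OF Bm[of n]] by simp
  have AB: "A \<subseteq> B n" unfolding A_def using main_part_null_part_Un[OF Bm[of n]] by blast
  have eA: "emeasure lborel A = emeasure lebesgue (B n)" unfolding A_def using Bm by simp
  have eA0: "emeasure lborel A \<noteq> 0" using eA nB Bm by (auto simp: null_sets_def)
  have "emeasure lborel A \<le> emeasure lborel {L..M}"
    by (rule emeasure_mono) (use AB in \<open>auto simp: B_def M_def\<close>)
  then have eAfin: "emeasure lborel A < \<infinity>" by (auto simp: M_def less_top[symmetric] top_unique)
  define c where "c = enn2real (emeasure lborel A)"
  have ec: "emeasure lborel A = ennreal c" using eAfin unfolding c_def by (simp add: less_top ennreal_enn2real)
  have c00: "c \<ge> 0" by (simp add: c_def)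
  have "c \<noteq> 0" using eA0 ec by auto
  then have c0: "c > 0" using c00 by linarith
  obtain P where P: "\<And>q a. q \<ge> P \<Longrightarrow> a \<ge> log (real q) 2 \<Longrightarrow>
      \<exists>r. llr (f0 q) (f1 q) (quantile (F0 q) (\<phi> (real q) a)) = ereal r \<and> \<bar>r / ln (real q) - \<alpha> a\<bar> \<le> \<delta>/2"
    using tail \<delta>0 unfolding unif_tail_limit_def by (metis half_gt_zero)
  define q where "q = max (max P p) (nat \<lceil>exp (2 / c)\<rceil>)"
  have qP: "q \<ge> P" and qp: "q \<ge> p" unfolding q_def by auto
  have q1: "real q > 1" using qp p by linarith
  have "real q \<ge> exp (2 / c)" unfolding q_def by linarith
  then have "ln (exp (2 / c)) \<le> ln (real q)" using q1 by (subst ln_le_cancel_iff) auto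
  then have lnq: "ln (real q) \<ge> 2 / c" by simp
  have lnq0: "ln (real q) > 0" using q1 by simp
  have logq: "log (real q) 2 \<le> L"
  proof -
    have "ln (real p) \<le> ln (real q)" using qp p by simp
    moreover have "ln (real p) > 0" using p by simp
    ultimately have "ln 2 / ln (real q) \<le> ln 2 / ln (real p)"
      by (intro divide_left_mono) auto
    then show ?thesis by (simp add: L_def log_def)
  qed
  define h where "h x = (if 0 < f0 q x then f1 q x / f0 q x else 0)" for x
  define k where "k u = (if u \<in> {0<..<1} then h (quantile (F0 q) u) else 0)" for u
  have fm0[measurable]: "f0 q \<in> borel_measurable borel" and fm1[measurable]: "f1 q \<in> borel_measurable borel"
    using dens0[of q] dens1[of q] by (auto simp: cdf_with_density_def)
  have hm[measurable]: "h \<in> borel_measurable borel" unfolding h_def[abs_def] by measurable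
  have km[measurable]: "k \<in> borel_measurable borel"
    unfolding k_def[abs_def]
  proof (subst measurable_If_restrict_space_iff)
    show "{x \<in> space borel. x \<in> {0<..<1::real}} \<in> sets borel" by simp
    have "(\<lambda>u. h (quantile (F0 q) u)) \<in> borel_measurable (restrict_space borel {0<..<1})"
      by (rule measurable_compose[OF quantile_measurable[OF dens0[of q]] hm])
    then show "(\<lambda>u. h (quantile (F0 q) u)) \<in> borel_measurable (restrict_space borel {x. x \<in> {0<..<1::real}})
      \<and> (\<lambda>x. 0::real) \<in> borel_measurable (restrict_space borel {x. x \<notin> {0<..<1}})"
      unfolding Collect_mem_eq by simp
  qed
  have pt: "ln (real q) \<le> k (\<phi> (real q) a) * (real q powr -a * ln (real q))" if aA: "a \<in> A" for a
  proof -
    have aB: "a \<in> B n" using aA AB by auto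
    then have aL: "L \<le> a" and al: "a + \<delta> < \<alpha> a" by (auto simp: B_def \<delta>_def)
    have a0: "a > 0" using aL L0 by linarith
    obtain r where r: "llr (f0 q) (f1 q) (quantile (F0 q) (\<phi> (real q) a)) = ereal r"
      and rb: "\<bar>r / ln (real q) - \<alpha> a\<bar> \<le> \<delta>/2"
      using P[OF qP, of a] aL logq by (meson order_trans)
    have "r / ln (real q) \<ge> a" using rb al \<delta>0 by linarith
    then have ra: "r \<ge> a * ln (real q)" using lnq0 by (simp add: field_simps)
    then have r0: "r > 0" using a0 lnq0 by (smt (verit) mult_pos_pos)
    define x where "x = quantile (F0 q) (\<phi> (real q) a)"
    have fx: "0 < f0 q x" "0 < f1 q x" "r = ln (f1 q x / f0 q x)"
      using llr_pos[OF r[folded x_def] r0] by auto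
    have ph: "\<phi> (real q) a \<in> {0<..<1}" using phi01 q1 a0 by blast
    have kx: "k (\<phi> (real q) a) = exp r"
      using fx ph by (simp add: k_def h_def x_def[symmetric])
    have "real q powr a = exp (a * ln (real q))" using q1 by (simp add: powr_def)
    also have "\<dots> \<le> exp r" using ra by simp
    finally have "real q powr a \<le> k (\<phi> (real q) a)" using kx by simp
    then have "real q powr a * (real q powr -a * ln (real q)) \<le> k (\<phi> (real q) a) * (real q powr -a * ln (real q))"
      using lnq0 by (intro mult_right_mono) auto
    moreover have "real q powr a * (real q powr -a * ln (real q)) = ln (real q)"
      using q1 by (simp add: powr_minus field_simps)
    ultimately show ?thesis by simp
  qed
  have "ennreal (ln (real q) * c) = (\<integral>\<^sup>+ t. ennreal (ln (real q)) * indicator A t \<partial>lborel)"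
    using ec c0 lnq0 by (subst nn_integral_cmult_indicator[OF Am]) (simp add: ennreal_mult)
  also have "\<dots> \<le> (\<integral>\<^sup>+ t. ennreal (k (\<phi> (real q) t) * (real q powr -t * ln (real q)) * indicator {L..M} t) \<partial>lborel)"
  proof (rule nn_integral_mono)
    fix t
    show "ennreal (ln (real q)) * indicator A t \<le> ennreal (k (\<phi> (real q) t) * (real q powr -t * ln (real q)) * indicator {L..M} t)"
    proof (cases "t \<in> A")
      case True
      then have "t \<in> {L..M}" using AB by (auto simp: B_def M_def)
      then show ?thesis using True pt[OF True] by (simp add: ennreal_leI)
    qed simp
  qed
  also have "\<dots> \<le> (\<integral>\<^sup>+ u. ennreal (k u * indicator {0<..<1} u) \<partial>lborel)"
    by (rule sub[OF km q1 L0]) (simp add: M_def)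
  also have "\<dots> = (\<integral>\<^sup>+ u. ennreal (h (quantile (F0 q) u)) * indicator {0<..<1} u \<partial>lborel)"
    by (intro nn_integral_cong) (auto simp: k_def indicator_def)
  also have "\<dots> = (\<integral>\<^sup>+ x. ennreal (f0 q x) * ennreal (h x) \<partial>lborel)"
    by (rule quantile_nn_integral[OF dens0[of q]]) measurable
  also have "\<dots> \<le> (\<integral>\<^sup>+ x. ennreal (f1 q x) \<partial>lborel)"
  proof (rule nn_integral_mono)
    fix x
    have nn: "0 \<le> f0 q x" "0 \<le> f1 q x" using dens0[of q] dens1[of q] by (auto simp: cdf_with_density_def)
    show "ennreal (f0 q x) * ennreal (h x) \<le> ennreal (f1 q x)"
    proof (cases "0 < f0 q x")
      case True
      then show ?thesis using nn by (simp add: h_def ennreal_mult[symmetric])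
    qed (simp add: h_def)
  qed
  also have "\<dots> = 1"
    using dens1[of q] nn_integral_eq_integral[of lborel "f1 q"] by (auto simp: cdf_with_density_def)
  finally have "ennreal (ln (real q) * c) \<le> 1" .
  moreover have "ln (real q) * c \<ge> 2" using lnq c0 by (simp add: field_simps)
  ultimately show False by (simp add: ennreal_le_1) 
qed

theorem lemma4:
  fixes F0 F1 f0 f1 :: "nat \<Rightarrow> nat \<Rightarrow> real \<Rightarrow> real"
    and \<alpha>m \<alpha>p :: "nat \<Rightarrow> real \<Rightarrow> real"
  assumes dens0: "\<And>k p. k \<in> {1,2} \<Longrightarrow> cdf_with_density (F0 k p) (f0 k p)"
    and dens1: "\<And>k p. k \<in> {1,2} \<Longrightarrow> cdf_with_density (F1 k p) (f1 k p)"
    and meas_m: "\<And>k. k \<in> {1,2} \<Longrightarrow> \<alpha>m k \<in> borel_measurable lebesgue"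
    and meas_p: "\<And>k. k \<in> {1,2} \<Longrightarrow> \<alpha>p k \<in> borel_measurable lebesgue"
    and pos: "\<And>k. k \<in> {1,2} \<Longrightarrow> emeasure lebesgue {a. 0 < max (\<alpha>m k a) (\<alpha>p k a)} > 0"
    and tail_m: "\<And>k. k \<in> {1,2} \<Longrightarrow>
      unif_tail_limit (\<lambda>p a. llr (f0 k p) (f1 k p) (quantile (F0 k p) (real p powr (-a)))) (\<alpha>m k)"
    and tail_p: "\<And>k. k \<in> {1,2} \<Longrightarrow>
      unif_tail_limit (\<lambda>p a. llr (f0 k p) (f1 k p) (quantile (F0 k p) (1 - real p powr (-a)))) (\<alpha>p k)"
  shows "\<forall>k\<in>{1,2}. \<forall>p::nat. p \<ge> 2 \<longrightarrow>
           esssup (restrict_space lebesgue {log (real p) 2..}) (\<lambda>a. ereal (\<alpha>m k a - a)) \<le> 0 \<and>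
           esssup (restrict_space lebesgue {log (real p) 2..}) (\<lambda>a. ereal (\<alpha>p k a - a)) \<le> 0"
proof (intro ballI allI impI conjI)
  fix k p assume k: "k \<in> {1::nat,2}" and p: "2 \<le> (p::nat)"
  have m: "\<And>q t. q > 1 \<Longrightarrow> t > 0 \<Longrightarrow> q powr -t \<in> {0<..<1::real}"
    by (auto simp: powr_less_one)
  have pl: "\<And>q t. q > 1 \<Longrightarrow> t > 0 \<Longrightarrow> 1 - q powr -t \<in> {0<..<1::real}"
    by (auto simp: powr_less_one)
  show "esssup (restrict_space lebesgue {log (real p) 2..}) (\<lambda>a. ereal (\<alpha>m k a - a)) \<le> 0"
    by (rule main_generic[where \<phi>="\<lambda>q a. q powr -a", OF dens0[OF k] dens1[OF k] meas_m[OF k] _ subst_minus m p])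
       (use tail_m[OF k] in simp_all)
  show "esssup (restrict_space lebesgue {log (real p) 2..}) (\<lambda>a. ereal (\<alpha>p k a - a)) \<le> 0"
    by (rule main_generic[where \<phi>="\<lambda>q a. 1 - q powr -a", OF dens0[OF k] dens1[OF k] meas_p[OF k] _ subst_plus pl p])
       (use tail_p[OF k] in simp_all)
qed

end
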